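(* Assume (A1) and (A2) below. Then for any policy $\pi$ and any $s\in\mathcal S$, the posterior variance of the value function $U_t^\pi(s)=\mathbb{V}_{p\sim\Phi_t}\big[V^{\pi,p}(s)\big]$ satisfies the uncertainty Bellman equation $$U_t^\pi(s)=\gamma^2u_t(s)+\gamma^2\sum_{a,s'}\pi(a\mid s)\,\bar p_t(s'\mid s,a)\,U_t^\pi(s'),$$ where the local uncertainty is $$u_t(s)=\mathbb{V}_{a,s'\sim\pi,\bar p_t}\big[\bar V_t^\pi(s')\big]-\mathbb{E}_{p\sim\Phi_t}\Big[\mathbb{V}_{a,s'\sim\pi,p}\big[V^{\pi,p}(s')\big]\Big].$$
   Context: Let $\mathcal S$ be a finite state space, $\mathcal A$ a finite action space, $r:\mathcal S\times\mathcal A\to\mathbb R$ a known bounded (deterministic) reward function and $\gamma\in[0,1)$ a discount factor. A transition function $p$ assigns to each $(s,a)$ a probability distribution $p(\cdot\mid s,a)$ on $\mathcal S$. A policy $\pi$ gives distributions $\pi(\cdot\mid s)$ on $\mathcal A$. For a transition function $p$, the value function is $V^{\pi,p}(s)=\mathbb E\big[\sum_{h\ge 0}\gamma^h r(s_h,a_h)\mid s_0=s\big]$ with $a_h\sim\pi(\cdot\mid s_h)$, $s_{h+1}\sim p(\cdot\mid s_h,a_h)$. The transition function $p$ is a random variable with (posterior) distribution $\Phi_t$. Define $\bar p_t(s'\mid s,a)=\mathbb E_{p\sim\Phi_t}[p(s'\mid s,a)]$ and $\bar V^\pi_t(s)=\mathbb E_{p\sim\Phi_t}[V^{\pi,p}(s)]$.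 For a transition function $q$ and a function $f$ on $\mathcal S$, $\mathbb V_{a,s'\sim\pi,q}[f(s')]$ denotes the variance of $f(s')$ when $a\sim\pi(\cdot\mid s)$ and $s'\sim q(\cdot\mid s,a)$. Assumptions: (A1) (independent transitions) $p(s'\mid x,a)$ and $p(s'\mid y,a)$ are independent random variables if $x\neq y$; (A2) (acyclic MDP) the MDP is a directed acyclic graph, i.e., states are not visited more than once in any given episode. *)

theory Defs
  imports "HOL-Probability.Probability"
begin

definition is_dist :: "('x::finite \<Rightarrow> real) \<Rightarrow> bool" where
  "is_dist w \<longleftrightarrow> (\<forall>x. 0 \<le> w x) \<and> (\<Sum>x\<in>UNIV. w x) = 1"

text \<open>occ pol p h s x = probability that s_h = x when s_0 = s, a_k ~ pol(.|s_k),
  s_{k+1} ~ p(.|s_k,a_k).\<close>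
fun occ :: "('s::finite \<Rightarrow> 'a::finite \<Rightarrow> real) \<Rightarrow> ('s \<Rightarrow> 'a \<Rightarrow> 's \<Rightarrow> real)
             \<Rightarrow> nat \<Rightarrow> 's \<Rightarrow> 's \<Rightarrow> real" where
  "occ pol p 0 s x = (if x = s then 1 else 0)"
| "occ pol p (Suc h) s x = (\<Sum>y\<in>UNIV. occ pol p h s y * (\<Sum>a\<in>UNIV. pol y a * p y a x))"

definition mdp_value :: "real \<Rightarrow> ('s::finite \<Rightarrow> 'a::finite \<Rightarrow> real) \<Rightarrow> ('s \<Rightarrow> 'a \<Rightarrow> real)
             \<Rightarrow> ('s \<Rightarrow> 'a \<Rightarrow> 's \<Rightarrow> real) \<Rightarrow> 's \<Rightarrow> real" where
  "mdp_value \<gamma> r pol p s =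
     (\<Sum>h. \<gamma> ^ h * (\<Sum>x\<in>UNIV. occ pol p h s x * (\<Sum>a\<in>UNIV. pol x a * r x a)))"

definition step_var :: "('s::finite \<Rightarrow> 'a::finite \<Rightarrow> real) \<Rightarrow> ('s \<Rightarrow> 'a \<Rightarrow> 's \<Rightarrow> real)
             \<Rightarrow> 's \<Rightarrow> ('s \<Rightarrow> real) \<Rightarrow> real" where
  "step_var pol q s f =
     (let m = (\<Sum>a\<in>UNIV. \<Sum>s'\<in>UNIV. pol s a * q s a s' * f s')
      in (\<Sum>a\<in>UNIV. \<Sum>s'\<in>UNIV. pol s a * q s a s' * (f s' - m)\<^sup>2))"

text \<open>Posterior quantities: the random transition function is P : Omega -> transitions,
  with Omega carrying the probability measure M (law of P is Phi_t).\<close>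
definition mean_trans :: "'w measure \<Rightarrow> ('w \<Rightarrow> 's \<Rightarrow> 'a \<Rightarrow> 's \<Rightarrow> real) \<Rightarrow> 's \<Rightarrow> 'a \<Rightarrow> 's \<Rightarrow> real" where
  "mean_trans M P s a s' = prob_space.expectation M (\<lambda>\<omega>. P \<omega> s a s')"

definition mean_value :: "'w measure \<Rightarrow> ('w \<Rightarrow> 's::finite \<Rightarrow> 'a::finite \<Rightarrow> 's \<Rightarrow> real)
             \<Rightarrow> real \<Rightarrow> ('s \<Rightarrow> 'a \<Rightarrow> real) \<Rightarrow> ('s \<Rightarrow> 'a \<Rightarrow> real) \<Rightarrow> 's \<Rightarrow> real" where
  "mean_value M P \<gamma> r pol s = prob_space.expectation M (\<lambda>\<omega>. mdp_value \<gamma> r pol (P \<omega>) s)"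

definition post_var :: "'w measure \<Rightarrow> ('w \<Rightarrow> 's::finite \<Rightarrow> 'a::finite \<Rightarrow> 's \<Rightarrow> real)
             \<Rightarrow> real \<Rightarrow> ('s \<Rightarrow> 'a \<Rightarrow> real) \<Rightarrow> ('s \<Rightarrow> 'a \<Rightarrow> real) \<Rightarrow> 's \<Rightarrow> real" where
  "post_var M P \<gamma> r pol s = prob_space.variance M (\<lambda>\<omega>. mdp_value \<gamma> r pol (P \<omega>) s)"

definition local_unc :: "'w measure \<Rightarrow> ('w \<Rightarrow> 's::finite \<Rightarrow> 'a::finite \<Rightarrow> 's \<Rightarrow> real)
             \<Rightarrow> real \<Rightarrow> ('s \<Rightarrow> 'a \<Rightarrow> real) \<Rightarrow> ('s \<Rightarrow> 'a \<Rightarrow> real) \<Rightarrow> 's \<Rightarrow> real" where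
  "local_unc M P \<gamma> r pol s =
     step_var pol (mean_trans M P) s (mean_value M P \<gamma> r pol)
     - prob_space.expectation M (\<lambda>\<omega>. step_var pol (P \<omega>) s (mdp_value \<gamma> r pol (P \<omega>)))"

end

theory Submission
  imports Defs
begin

definition tr :: "('s::finite \<Rightarrow> 'a::finite \<Rightarrow> real) \<Rightarrow> ('s \<Rightarrow> 'a \<Rightarrow> 's \<Rightarrow> real) \<Rightarrow> 's \<Rightarrow> 's \<Rightarrow> real"
  where "tr pol p x y = (\<Sum>a\<in>UNIV. pol x a * p x a y)"

definition rew :: "('s::finite \<Rightarrow> 'a::finite \<Rightarrow> real) \<Rightarrow> ('s \<Rightarrow> 'a \<Rightarrow> real) \<Rightarrow> 's \<Rightarrow> real"
  where "rew pol r x = (\<Sum>a\<in>UNIV. pol x a * r x a)"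

lemma occ_Suc_tr: "occ pol p (Suc h) s x = (\<Sum>y\<in>UNIV. occ pol p h s y * tr pol p y x)"
  by (simp add: tr_def)

declare occ.simps(2)[simp del]

lemma occ_first: "occ pol p (Suc h) s x = (\<Sum>y\<in>UNIV. tr pol p s y * occ pol p h y x)"
proof (induction h arbitrary: x)
  case 0
  have "occ pol p (Suc 0) s x = (\<Sum>y\<in>UNIV. (if y = s then tr pol p y x else 0))"
    by (simp only: occ_Suc_tr occ.simps(1)) (rule sum.cong, auto)
  moreover have "(\<Sum>y\<in>UNIV. tr pol p s y * occ pol p 0 y x) = (\<Sum>y\<in>UNIV. (if y = x then tr pol p s y else 0))"
    by (rule sum.cong, auto)
  ultimately show ?case by simp
next
  case (Suc h)
  have "occ pol p (Suc (Suc h)) s x = (\<Sum>y\<in>UNIV. (\<Sum>z\<in>UNIV. tr pol p s z * occ pol p h z y) * tr pol p y x)"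
    by (simp only: occ_Suc_tr[of _ _ "Suc h"] Suc.IH)
  also have "\<dots> = (\<Sum>z\<in>UNIV. tr pol p s z * (\<Sum>y\<in>UNIV. occ pol p h z y * tr pol p y x))"
    unfolding sum_distrib_right sum_distrib_left mult.assoc by (rule sum.swap)
  also have "\<dots> = (\<Sum>z\<in>UNIV. tr pol p s z * occ pol p (Suc h) z x)"
    by (simp add: occ_Suc_tr)
  finally show ?case .
qed

locale dists =
  fixes pol :: "'s::finite \<Rightarrow> 'a::finite \<Rightarrow> real" and p :: "'s \<Rightarrow> 'a \<Rightarrow> 's \<Rightarrow> real"
  assumes pd: "\<And>x. is_dist (pol x)" and td: "\<And>x a. is_dist (p x a)"
begin

lemma pol_nn: "0 \<le> pol x a" using pd[of x] by (simp add: is_dist_def)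
lemma p_nn: "0 \<le> p x a y" using td[of x a] by (simp add: is_dist_def)
lemma pol_sum: "(\<Sum>a\<in>UNIV. pol x a) = 1" using pd[of x] by (simp add: is_dist_def)
lemma p_sum: "(\<Sum>y\<in>UNIV. p x a y) = 1" using td[of x a] by (simp add: is_dist_def)

lemma tr_nn: "0 \<le> tr pol p x y"
  unfolding tr_def by (intro sum_nonneg mult_nonneg_nonneg pol_nn p_nn)

lemma tr_sum: "(\<Sum>y\<in>UNIV. tr pol p x y) = 1"
  unfolding tr_def by (subst sum.swap) (simp add: sum_distrib_left[symmetric] p_sum pol_sum)

lemma occ_nn: "0 \<le> occ pol p h s x"
  by (induction h arbitrary: x) (auto intro!: sum_nonneg mult_nonneg_nonneg tr_nn simp: occ_Suc_tr)

lemma occ_sum: "(\<Sum>x\<in>UNIV. occ pol p h s x) = 1"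
proof (induction h)
  case 0 then show ?case by simp
next
  case (Suc h)
  have "(\<Sum>x\<in>UNIV. occ pol p (Suc h) s x) = (\<Sum>y\<in>UNIV. occ pol p h s y * (\<Sum>x\<in>UNIV. tr pol p y x))"
    by (simp add: occ_Suc_tr sum_distrib_left) (rule sum.swap)
  then show ?case by (simp add: tr_sum Suc)
qed

lemma occ_le1: "occ pol p h s x \<le> 1"
proof -
  have "occ pol p h s x \<le> (\<Sum>x\<in>UNIV. occ pol p h s x)"
    by (rule member_le_sum) (auto simp: occ_nn)
  then show ?thesis by (simp add: occ_sum)
qed

end

definition gstep where "gstep pol p r h s = (\<Sum>x\<in>UNIV. occ pol p h s x * rew pol r x)"

lemma mdp_value_gstep: "mdp_value \<gamma> r pol p s = (\<Sum>h. \<gamma> ^ h * gstep pol p r h s)"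
  by (simp add: mdp_value_def gstep_def rew_def)

lemma gstep_Suc: "gstep pol p r (Suc h) s = (\<Sum>y\<in>UNIV. tr pol p s y * gstep pol p r h y)"
  unfolding gstep_def occ_first sum_distrib_right sum_distrib_left mult.assoc by (rule sum.swap)

context dists begin

definition "bnd r = (\<Sum>x\<in>UNIV. \<bar>rew pol r x\<bar>)"

lemma gstep_bound: "\<bar>gstep pol p r h s\<bar> \<le> bnd r"
proof -
  have "\<bar>gstep pol p r h s\<bar> \<le> (\<Sum>x\<in>UNIV. \<bar>occ pol p h s x * rew pol r x\<bar>)"
    unfolding gstep_def by (rule sum_abs)
  also have "\<dots> \<le> bnd r" unfolding bnd_def
    by (intro sum_mono) (auto simp: abs_mult occ_nn occ_le1 intro!: mult_left_le_one_le)
  finally show ?thesis .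
qed

lemma summable_g:
  assumes "0 \<le> \<gamma>" "\<gamma> < 1"
  shows "summable (\<lambda>h. \<gamma> ^ h * gstep pol p r h s)"
proof (rule summable_comparison_test)
  show "\<exists>N. \<forall>n\<ge>N. norm (\<gamma> ^ n * gstep pol p r n s) \<le> \<gamma> ^ n * bnd r"
    using assms gstep_bound by (auto simp: abs_mult intro!: mult_left_mono)
  show "summable (\<lambda>n. \<gamma> ^ n * bnd r)"
    using assms by (intro summable_mult2 summable_geometric) auto
qed

lemma value_bound:
  assumes "0 \<le> \<gamma>" "\<gamma> < 1"
  shows "\<bar>mdp_value \<gamma> r pol p s\<bar> \<le> bnd r / (1 - \<gamma>)"
proof -
  have s1: "summable (\<lambda>n. \<gamma> ^ n * bnd r)"
    using assms by (intro summable_mult2 summable_geometric) auto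
  have "\<bar>mdp_value \<gamma> r pol p s\<bar> = norm (\<Sum>h. \<gamma> ^ h * gstep pol p r h s)"
    by (simp add: mdp_value_gstep)
  also have "\<dots> \<le> (\<Sum>h. \<gamma> ^ h * bnd r)"
    using assms gstep_bound
    by (intro norm_suminf_le s1) (auto simp: abs_mult intro!: mult_left_mono)
  also have "\<dots> = bnd r / (1 - \<gamma>)"
    using assms by (simp add: suminf_mult2[symmetric] suminf_geometric divide_simps)
  finally show ?thesis .
qed

lemma bellman:
  assumes "0 \<le> \<gamma>" "\<gamma> < 1"
  shows "mdp_value \<gamma> r pol p s = rew pol r s + \<gamma> * (\<Sum>y\<in>UNIV. tr pol p s y * mdp_value \<gamma> r pol p y)"
proof -
  let ?f = "\<lambda>h. \<gamma> ^ h * gstep pol p r h s"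
  have sm: "summable ?f" by (rule summable_g[OF assms])
  have "(\<Sum>h. ?f (Suc h)) = suminf ?f - ?f 0" by (rule suminf_split_head[OF sm])
  moreover have "?f 0 = rew pol r s"
    by (simp add: gstep_def if_distrib if_distribR cong: if_cong)
  moreover have "(\<Sum>h. ?f (Suc h)) = \<gamma> * (\<Sum>y\<in>UNIV. tr pol p s y * mdp_value \<gamma> r pol p y)"
  proof -
    have "(\<Sum>h. ?f (Suc h)) = (\<Sum>h. \<Sum>y\<in>UNIV. \<gamma> * tr pol p s y * (\<gamma> ^ h * gstep pol p r h y))"
      by (simp add: gstep_Suc sum_distrib_left mult_ac)
    also have "\<dots> = (\<Sum>y\<in>UNIV. \<Sum>h. \<gamma> * tr pol p s y * (\<gamma> ^ h * gstep pol p r h y))"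
      by (rule suminf_sum) (intro summable_mult summable_g[OF assms])
    also have "\<dots> = (\<Sum>y\<in>UNIV. \<gamma> * tr pol p s y * mdp_value \<gamma> r pol p y)"
      by (intro sum.cong refl, subst suminf_mult[OF summable_g[OF assms]]) (simp add: mdp_value_gstep)
    finally show ?thesis by (simp add: sum_distrib_left mult_ac)
  qed
  ultimately show ?thesis by (simp add: mdp_value_gstep)
qed

end

lemma occ_agree:
  assumes closed: "\<And>x a z. x \<in> K \<Longrightarrow> p x a z \<noteq> 0 \<Longrightarrow> z \<in> K"
    and sK: "s \<in> K" and eq: "\<And>x. x \<in> K \<Longrightarrow> p x = q x"
  shows "occ pol p h s x = occ pol q h s x \<and> (x \<notin> K \<longrightarrow> occ pol p h s x = 0)"
proof (induction h arbitrary: x)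
  case 0 then show ?case using sK by auto
next
  case (Suc h)
  have e1: "occ pol p h s y * tr pol p y x = occ pol q h s y * tr pol q y x" for y
    using Suc[of y] eq[of y] by (cases "y \<in> K") (auto simp: tr_def)
  have e2: "x \<notin> K \<Longrightarrow> occ pol p h s y * tr pol p y x = 0" for y
  proof (cases "y \<in> K")
    case True
    assume "x \<notin> K"
    then have "p y a x = 0" for a using closed[of y a x] True by auto
    then show ?thesis by (simp add: tr_def)
  next
    case False then show ?thesis using Suc[of y] by auto
  qed
  have "occ pol p (Suc h) s x = occ pol q (Suc h) s x"
    unfolding occ_Suc_tr using e1 by simp
  moreover have "x \<notin> K \<Longrightarrow> occ pol p (Suc h) s x = 0"
    unfolding occ_Suc_tr using e2 by (intro sum.neutral) blast
  ultimately show ?case by blast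
qed

lemma value_agree:
  assumes closed: "\<And>x a z. x \<in> K \<Longrightarrow> p x a z \<noteq> 0 \<Longrightarrow> z \<in> K"
    and sK: "s \<in> K" and eq: "\<And>x. x \<in> K \<Longrightarrow> p x = q x"
  shows "mdp_value \<gamma> r pol p s = mdp_value \<gamma> r pol q s"
  using occ_agree[OF assms] by (simp add: mdp_value_def)

lemma occ_meas:
  assumes "\<And>x a z. (\<lambda>\<omega>. p \<omega> x a z) \<in> borel_measurable N"
  shows "(\<lambda>\<omega>. occ pol (p \<omega>) h s x) \<in> borel_measurable N"
proof (induction h arbitrary: x)
  case 0 then show ?case by simp
next
  case (Suc h)
  show ?case unfolding occ_Suc_tr tr_def using Suc assms by measurable
qed

lemma value_meas:
  assumes "\<And>x a z. (\<lambda>\<omega>. p \<omega> x a z) \<in> borel_measurable N"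
  shows "(\<lambda>\<omega>. mdp_value \<gamma> r pol (p \<omega>) s) \<in> borel_measurable N"
  unfolding mdp_value_def using occ_meas[OF assms] by measurable

lemma comp_meas:
  fixes x :: 'x and a :: 'b and z :: 'c
  shows
  "(\<lambda>\<rho>. if x \<in> K then \<rho> x (a, z) else (0::real)) \<in> borel_measurable (PiM K (\<lambda>_. PiM UNIV (\<lambda>_. borel)))"
proof (cases "x \<in> K")
  case True
  have 1: "(\<lambda>\<rho>. \<rho> x :: 'b\<times>'c \<Rightarrow> real) \<in> measurable (PiM K (\<lambda>_. PiM UNIV (\<lambda>_. borel))) (PiM (UNIV :: ('b\<times>'c) set) (\<lambda>_. (borel :: real measure)))"
    using True by (rule measurable_component_singleton)
  have 2: "(\<lambda>g. g (a, z)) \<in> measurable (PiM (UNIV :: ('b\<times>'c) set) (\<lambda>_. (borel :: real measure))) borel"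
    by (rule measurable_component_singleton) (rule UNIV_I)
  have "(\<lambda>\<rho>. \<rho> x (a, z) :: real) \<in> borel_measurable (PiM K (\<lambda>_. PiM UNIV (\<lambda>_. borel)))"
    using measurable_compose[OF 1 2] by simp
  then show ?thesis using True by simp
next
  case False then show ?thesis by simp
qed

lemma (in prob_space) indep_key:
  fixes P :: "'a \<Rightarrow> 's::finite \<Rightarrow> 'b::finite \<Rightarrow> 's \<Rightarrow> real" and f :: "real \<Rightarrow> real"
  assumes A1: "indep_vars (\<lambda>_. PiM UNIV (\<lambda>_. borel)) (\<lambda>x \<omega>. (\<lambda>(a, y). P \<omega> x a y)) UNIV"
    and closed: "\<And>\<omega> x a z. x \<in> K \<Longrightarrow> P \<omega> x a z \<noteq> 0 \<Longrightarrow> z \<in> K"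
    and sK: "s \<notin> K" and yK: "y \<in> K"
    and fm: "f \<in> borel_measurable borel"
  shows "indep_var borel (\<lambda>\<omega>. P \<omega> s a z) borel (\<lambda>\<omega>. f (mdp_value \<gamma> r pol (P \<omega>) y))"
proof -
  let ?X = "\<lambda>x \<omega>. (\<lambda>(a, y). P \<omega> x a y)"
  let ?M' = "\<lambda>_::'s. PiM UNIV (\<lambda>_::'b\<times>'s. (borel :: real measure))"
  have ind: "indep_var (PiM {s} ?M') (\<lambda>\<omega>. restrict (\<lambda>i. ?X i \<omega>) {s}) (PiM K ?M') (\<lambda>\<omega>. restrict (\<lambda>i. ?X i \<omega>) K)"
    by (rule indep_var_restrict[OF A1]) (use sK in auto)
  let ?Q = "\<lambda>\<rho>. (\<lambda>x a z. if x \<in> K then \<rho> x (a, z) else (0::real))"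
  have m1: "(\<lambda>\<rho>. \<rho> s (a, z)) \<in> borel_measurable (PiM {s} ?M')"
    using comp_meas[of s "{s}" a z] by simp
  have m2: "(\<lambda>\<rho>. f (mdp_value \<gamma> r pol (?Q \<rho>) y)) \<in> borel_measurable (PiM K ?M')"
    using measurable_compose[OF value_meas[of ?Q, OF comp_meas] fm] .
  have "indep_var borel ((\<lambda>\<rho>. \<rho> s (a, z)) \<circ> (\<lambda>\<omega>. restrict (\<lambda>i. ?X i \<omega>) {s}))
          borel ((\<lambda>\<rho>. f (mdp_value \<gamma> r pol (?Q \<rho>) y)) \<circ> (\<lambda>\<omega>. restrict (\<lambda>i. ?X i \<omega>) K))"
    by (rule indep_var_compose[OF ind m1 m2])
  moreover have "((\<lambda>\<rho>. \<rho> s (a, z)) \<circ> (\<lambda>\<omega>. restrict (\<lambda>i. ?X i \<omega>) {s})) = (\<lambda>\<omega>. P \<omega> s a z)"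
    by (simp add: fun_eq_iff)
  moreover have "((\<lambda>\<rho>. f (mdp_value \<gamma> r pol (?Q \<rho>) y)) \<circ> (\<lambda>\<omega>. restrict (\<lambda>i. ?X i \<omega>) K))
      = (\<lambda>\<omega>. f (mdp_value \<gamma> r pol (P \<omega>) y))"
  proof (rule ext)
    fix \<omega>
    have "mdp_value \<gamma> r pol (P \<omega>) y = mdp_value \<gamma> r pol (?Q (restrict (\<lambda>i. ?X i \<omega>) K)) y"
      by (rule value_agree[where K=K]) (auto simp: closed yK fun_eq_iff)
    then show "((\<lambda>\<rho>. f (mdp_value \<gamma> r pol (?Q \<rho>) y)) \<circ> (\<lambda>\<omega>. restrict (\<lambda>i. ?X i \<omega>) K)) \<omega>
      = f (mdp_value \<gamma> r pol (P \<omega>) y)" by simp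
  qed
  ultimately show ?thesis by simp
qed

definition bdd :: "('w \<Rightarrow> real) \<Rightarrow> bool" where "bdd f \<longleftrightarrow> (\<exists>c. \<forall>\<omega>. \<bar>f \<omega>\<bar> \<le> c)"

lemma bdd_const[intro]: "bdd (\<lambda>\<omega>. c)" unfolding bdd_def by auto

lemma bdd_add[intro]: "bdd f \<Longrightarrow> bdd g \<Longrightarrow> bdd (\<lambda>\<omega>. f \<omega> + g \<omega>)"
  unfolding bdd_def by (metis (no_types, opaque_lifting) abs_triangle_ineq add_mono order_trans)

lemma bdd_uminus[intro]: "bdd f \<Longrightarrow> bdd (\<lambda>\<omega>. - f \<omega>)"
  unfolding bdd_def by auto

lemma bdd_diff[intro]: "bdd f \<Longrightarrow> bdd g \<Longrightarrow> bdd (\<lambda>\<omega>. f \<omega> - g \<omega>)"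
  using bdd_add[of f "\<lambda>\<omega>. - g \<omega>"] bdd_uminus[of g] by simp

lemma bdd_mult[intro]: "bdd f \<Longrightarrow> bdd g \<Longrightarrow> bdd (\<lambda>\<omega>. f \<omega> * g \<omega>)"
proof -
  assume "bdd f" "bdd g"
  then obtain c d where c: "\<And>\<omega>. \<bar>f \<omega>\<bar> \<le> c" and d: "\<And>\<omega>. \<bar>g \<omega>\<bar> \<le> d" unfolding bdd_def by blast
  have "\<bar>f \<omega> * g \<omega>\<bar> \<le> c * d" for \<omega>
    unfolding abs_mult by (rule mult_mono[OF c d]) (use c[of \<omega>] in auto)
  then show ?thesis unfolding bdd_def by blast
qed

lemma bdd_power2[intro]: "bdd f \<Longrightarrow> bdd (\<lambda>\<omega>. (f \<omega>)\<^sup>2)"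
  unfolding power2_eq_square by (rule bdd_mult)

lemma bdd_sum[intro]: "(\<And>i. i \<in> I \<Longrightarrow> bdd (f i)) \<Longrightarrow> bdd (\<lambda>\<omega>. \<Sum>i\<in>I. f i \<omega>)"
proof (induction I rule: infinite_finite_induct)
  case (infinite A) then show ?case by auto
next
  case empty then show ?case by auto
next
  case (insert x F) then show ?case by (simp add: bdd_add)
qed

lemma (in prob_space) bdd_integrable:
  "f \<in> borel_measurable M \<Longrightarrow> bdd f \<Longrightarrow> integrable M f"
  unfolding bdd_def by (metis (mono_tags, lifting) AE_I2 integrable_const_bound real_norm_def)

lemma (in prob_space) var_eq:
  assumes "f \<in> borel_measurable M" "bdd f"
  shows "expectation (\<lambda>\<omega>. (f \<omega> - expectation f)\<^sup>2) = expectation (\<lambda>\<omega>. (f \<omega>)\<^sup>2) - (expectation f)\<^sup>2"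
proof -
  let ?c = "expectation f"
  have i1: "integrable M f" by (rule bdd_integrable[OF assms])
  have i2: "integrable M (\<lambda>\<omega>. (f \<omega>)\<^sup>2)" using assms by (intro bdd_integrable) auto
  have "(\<lambda>\<omega>. (f \<omega> - ?c)\<^sup>2) = (\<lambda>\<omega>. ((f \<omega>)\<^sup>2 - 2 * ?c * f \<omega>) + ?c\<^sup>2)"
    by (simp add: fun_eq_iff power2_diff)
  then have "expectation (\<lambda>\<omega>. (f \<omega> - ?c)\<^sup>2) = expectation (\<lambda>\<omega>. (f \<omega>)\<^sup>2 - 2 * ?c * f \<omega>) + ?c\<^sup>2"
    using i1 i2 by (simp add: prob_space)
  also have "\<dots> = expectation (\<lambda>\<omega>. (f \<omega>)\<^sup>2) - 2 * ?c * ?c + ?c\<^sup>2"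
    using i1 i2 by simp
  finally show ?thesis by (simp add: power2_eq_square)
qed

lemma step_var_alt:
  fixes pol :: "'s::finite \<Rightarrow> 'a::finite \<Rightarrow> real"
  assumes "(\<Sum>a\<in>UNIV. \<Sum>y\<in>UNIV. pol s a * q s a y) = 1"
  shows "step_var pol q s f = (\<Sum>a\<in>UNIV. \<Sum>y\<in>UNIV. pol s a * q s a y * (f y)\<^sup>2)
           - (\<Sum>a\<in>UNIV. \<Sum>y\<in>UNIV. pol s a * q s a y * f y)\<^sup>2"
proof -
  define m where "m = (\<Sum>a\<in>UNIV. \<Sum>y\<in>UNIV. pol s a * q s a y * f y)"
  have "step_var pol q s f = (\<Sum>a\<in>UNIV. \<Sum>y\<in>UNIV. pol s a * q s a y * (f y)\<^sup>2
          - 2 * m * (pol s a * q s a y * f y) + m\<^sup>2 * (pol s a * q s a y))"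
    unfolding step_var_def Let_def m_def[symmetric]
    by (intro sum.cong refl) (simp add: power2_diff algebra_simps)
  also have "\<dots> = (\<Sum>a\<in>UNIV. \<Sum>y\<in>UNIV. pol s a * q s a y * (f y)\<^sup>2) - 2 * m * m + m\<^sup>2 * 1"
    by (simp add: sum.distrib sum_subtractf sum_distrib_left[symmetric] m_def assms[symmetric])
  finally show ?thesis by (simp add: m_def power2_eq_square)
qed

theorem theorem1:
  fixes M :: "'w measure"
    and P :: "'w \<Rightarrow> 's::finite \<Rightarrow> 'a::finite \<Rightarrow> 's \<Rightarrow> real"
    and pol :: "'s \<Rightarrow> 'a \<Rightarrow> real"
    and r :: "'s \<Rightarrow> 'a \<Rightarrow> real"
    and \<gamma> :: real
    and s :: 's
  assumes prob: "prob_space M"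
    and meas: "\<And>x a y. (\<lambda>\<omega>. P \<omega> x a y) \<in> borel_measurable M"
    and trans: "\<And>\<omega> x a. is_dist (P \<omega> x a)"
    and policy: "\<And>x. is_dist (pol x)"
    and gamma: "0 \<le> \<gamma>" "\<gamma> < 1"
    and A1: "prob_space.indep_vars M (\<lambda>_. PiM UNIV (\<lambda>_. borel))
               (\<lambda>x \<omega>. (\<lambda>(a, y). P \<omega> x a y)) UNIV"
    and A2: "\<exists>rank :: 's \<Rightarrow> nat. \<forall>\<omega> x a y. P \<omega> x a y \<noteq> 0 \<longrightarrow>
               rank y < rank x \<or> (y = x \<and> (\<forall>\<omega>' a'. P \<omega>' x a' x = 1))"
  shows "post_var M P \<gamma> r pol s =
           \<gamma>\<^sup>2 * local_unc M P \<gamma> r pol s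
           + \<gamma>\<^sup>2 * (\<Sum>a\<in>UNIV. \<Sum>s'\<in>UNIV. pol s a * mean_trans M P s a s' * post_var M P \<gamma> r pol s')"
proof -
  interpret prob_space M by (rule prob)
  have D: "\<And>\<omega>. dists pol (P \<omega>)" by (intro dists.intro policy trans)
  define V where "V = (\<lambda>\<omega> x. mdp_value \<gamma> r pol (P \<omega>) x)"
  define Vb where "Vb = mean_value M P \<gamma> r pol"
  define pb where "pb = mean_trans M P"
  define U where "U = post_var M P \<gamma> r pol"
  define X where "X = (\<lambda>\<omega>. \<Sum>a\<in>UNIV. \<Sum>y\<in>UNIV. pol s a * P \<omega> s a y * V \<omega> y)"
  define SV where "SV = (\<lambda>\<omega>. step_var pol (P \<omega>) s (V \<omega>))"
  define R where "R = rew pol r s"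
  define C where "C = (\<Sum>x\<in>UNIV. \<bar>rew pol r x\<bar>) / (1 - \<gamma>)"
  have Vb_def': "Vb x = expectation (\<lambda>\<omega>. V \<omega> x)" for x by (simp add: Vb_def mean_value_def V_def)
  have pb_def': "pb x a y = expectation (\<lambda>\<omega>. P \<omega> x a y)" for x a y by (simp add: pb_def mean_trans_def)
  have U_def': "U x = expectation (\<lambda>\<omega>. (V \<omega> x - Vb x)\<^sup>2)" for x
    by (simp add: U_def post_var_def V_def Vb_def' )
  have mP[measurable]: "(\<lambda>\<omega>. P \<omega> x a y) \<in> borel_measurable M" for x a y by (rule meas)
  have mV[measurable]: "(\<lambda>\<omega>. V \<omega> x) \<in> borel_measurable M" for x
    unfolding V_def by (rule value_meas[OF meas])
  have P_nn: "0 \<le> P \<omega> x a y" for \<omega> x a y using dists.p_nn[OF D] .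
  have P_le1: "P \<omega> x a y \<le> 1" for \<omega> x a y
  proof -
    have "P \<omega> x a y \<le> (\<Sum>z\<in>UNIV. P \<omega> x a z)" by (rule member_le_sum) (auto simp: P_nn)
    then show ?thesis using dists.p_sum[OF D] by simp
  qed
  have bP[intro]: "bdd (\<lambda>\<omega>. P \<omega> x a y)" for x a y
    unfolding bdd_def using P_nn P_le1 by (intro exI[of _ 1]) (auto simp: abs_le_iff intro: order_trans[of _ 0])
  have bV[intro]: "bdd (\<lambda>\<omega>. V \<omega> x)" for x
    unfolding bdd_def V_def
    using dists.value_bound[OF D gamma] by (auto simp: dists.bnd_def[OF D])
  have bell: "V \<omega> s = R + \<gamma> * X \<omega>" for \<omega>
  proof -
    have "(\<Sum>y\<in>UNIV. tr pol (P \<omega>) s y * V \<omega> y) = X \<omega>"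
      unfolding X_def tr_def sum_distrib_right by (rule sum.swap)
    then show ?thesis using dists.bellman[OF D gamma, of r \<omega> s] by (simp add: V_def R_def)
  qed
  have key: "expectation (\<lambda>\<omega>. P \<omega> s a y * f (V \<omega> y)) = pb s a y * expectation (\<lambda>\<omega>. f (V \<omega> y))"
    if fm: "f \<in> borel_measurable borel" and fb: "bdd (\<lambda>\<omega>. f (V \<omega> y))" for a y and f :: "real \<Rightarrow> real"
  proof -
    obtain rank :: "'s \<Rightarrow> nat" where rk: "\<And>\<omega> x a y. P \<omega> x a y \<noteq> 0 \<Longrightarrow>
               rank y < rank x \<or> (y = x \<and> (\<forall>\<omega>' a'. P \<omega>' x a' x = 1))"
      using A2 by blast
    have zero: ?thesis if z: "\<And>\<omega>. P \<omega> s a y = 0"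
      using z by (simp add: pb_def')
    show ?thesis
    proof (cases "\<forall>\<omega>' a'. P \<omega>' s a' s = 1")
      case True
      show ?thesis
      proof (cases "y = s")
        case True
        then show ?thesis using \<open>\<forall>\<omega>' a'. P \<omega>' s a' s = 1\<close> by (simp add: pb_def' prob_space)
      next
        case False
        have "P \<omega> s a y = 0" for \<omega>
        proof -
          have "(\<Sum>z\<in>UNIV. P \<omega> s a z) = P \<omega> s a s + (\<Sum>z\<in>UNIV - {s}. P \<omega> s a z)"
            by (simp add: sum.remove)
          then have "(\<Sum>z\<in>UNIV - {s}. P \<omega> s a z) = 0"
            using True dists.p_sum[OF D] by simp
          then show ?thesis using False P_nn sum_nonneg_eq_0_iff[of "UNIV - {s}" "\<lambda>z. P \<omega> s a z"]
            by auto
        qed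
        then show ?thesis by (rule zero)
      qed
    next
      case False
      have lt: "rank z < rank s" if "P \<omega> s a' z \<noteq> 0" for \<omega> a' z
        using rk[OF that] False by auto
      show ?thesis
      proof (cases "rank y < rank s")
        case False
        then show ?thesis using lt by (intro zero) force
      next
        case True
        let ?K = "{x. rank x < rank s}"
        have "indep_var borel (\<lambda>\<omega>. P \<omega> s a y) borel (\<lambda>\<omega>. f (mdp_value \<gamma> r pol (P \<omega>) y))"
        proof (rule indep_key[where K="?K", OF A1 _ _ _ fm])
          show "z \<in> ?K" if "x \<in> ?K" "P \<omega> x a z \<noteq> 0" for \<omega> x a z
            using rk[OF that(2)] that(1) by auto
        qed (use True in auto)
        then have ind: "indep_var borel (\<lambda>\<omega>. P \<omega> s a y) borel (\<lambda>\<omega>. f (V \<omega> y))"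
          by (simp add: V_def)
        show ?thesis unfolding pb_def'
          by (rule indep_var_lebesgue_integral[OF ind]) (auto intro!: bdd_integrable fb measurable_compose[OF mV fm])
      qed
    qed
  qed
  have key1: "expectation (\<lambda>\<omega>. P \<omega> s a y * V \<omega> y) = pb s a y * Vb y" for a y
    using key[of "\<lambda>t. t" y a] bV by (simp add: Vb_def')
  have key2: "expectation (\<lambda>\<omega>. P \<omega> s a y * (V \<omega> y)\<^sup>2) = pb s a y * expectation (\<lambda>\<omega>. (V \<omega> y)\<^sup>2)" for a y
    using key[of "\<lambda>t. t\<^sup>2" y a] bdd_power2[OF bV] by auto
  have iPV: "integrable M (\<lambda>\<omega>. P \<omega> x a y * V \<omega> z)" for x a y z
    by (intro bdd_integrable) auto
  have iPV2: "integrable M (\<lambda>\<omega>. P \<omega> x a y * (V \<omega> z)\<^sup>2)" for x a y z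
    by (intro bdd_integrable bdd_mult bP bdd_power2 bV) auto
  have X_alt: "X \<omega> = (\<Sum>a\<in>UNIV. \<Sum>y\<in>UNIV. pol s a * (P \<omega> s a y * V \<omega> y))" for \<omega>
    unfolding X_def by (simp add: mult.assoc)
  have mX[measurable]: "X \<in> borel_measurable M" unfolding X_def by measurable
  have bX: "bdd X" unfolding X_alt[abs_def] by (intro bdd_sum bdd_mult bdd_const bP bV)
  have iX: "integrable M X" by (rule bdd_integrable[OF mX bX])
  have S3: "expectation X = (\<Sum>a\<in>UNIV. \<Sum>y\<in>UNIV. pol s a * pb s a y * Vb y)"
  proof -
    have "expectation X = (\<Sum>a\<in>UNIV. \<Sum>y\<in>UNIV. pol s a * expectation (\<lambda>\<omega>. P \<omega> s a y * V \<omega> y))"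
      unfolding X_alt by (simp add: iPV integrable_sum)
    then show ?thesis by (simp add: key1 mult.assoc)
  qed
  have S4: "Vb s = R + \<gamma> * expectation X"
    unfolding Vb_def' bell using iX by (simp add: prob_space)
  have S5: "U s = \<gamma>\<^sup>2 * expectation (\<lambda>\<omega>. (X \<omega> - expectation X)\<^sup>2)"
  proof -
    have "(V \<omega> s - Vb s)\<^sup>2 = \<gamma>\<^sup>2 * (X \<omega> - expectation X)\<^sup>2" for \<omega>
      unfolding bell S4 by (simp add: power_mult_distrib[symmetric] algebra_simps)
    then show ?thesis unfolding U_def' by simp
  qed
  have S6: "expectation (\<lambda>\<omega>. (X \<omega> - expectation X)\<^sup>2) = expectation (\<lambda>\<omega>. (X \<omega>)\<^sup>2) - (expectation X)\<^sup>2"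
    by (rule var_eq[OF mX bX])
  have S7: "SV \<omega> = (\<Sum>a\<in>UNIV. \<Sum>y\<in>UNIV. pol s a * (P \<omega> s a y * (V \<omega> y)\<^sup>2)) - (X \<omega>)\<^sup>2" for \<omega>
  proof -
    have "(\<Sum>a\<in>UNIV. \<Sum>y\<in>UNIV. pol s a * P \<omega> s a y) = 1"
      by (simp add: sum_distrib_left[symmetric] dists.p_sum[OF D] dists.pol_sum[OF D])
    from step_var_alt[where pol=pol and q="P \<omega>" and s=s and f="V \<omega>", OF this] show ?thesis
      by (simp add: SV_def X_def mult.assoc)
  qed
  have mSV[measurable]: "SV \<in> borel_measurable M" unfolding S7[abs_def] by measurable
  have bSV: "bdd SV" unfolding S7[abs_def] using bX by (intro bdd_diff bdd_sum bdd_mult bdd_const bdd_power2 bP bV)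
  have iSV: "integrable M SV" by (rule bdd_integrable[OF mSV bSV])
  have S8: "expectation (\<lambda>\<omega>. (X \<omega>)\<^sup>2) = (\<Sum>a\<in>UNIV. \<Sum>y\<in>UNIV. pol s a * (pb s a y * expectation (\<lambda>\<omega>. (V \<omega> y)\<^sup>2))) - expectation SV"
  proof -
    have e: "(X \<omega>)\<^sup>2 = (\<Sum>a\<in>UNIV. \<Sum>y\<in>UNIV. pol s a * (P \<omega> s a y * (V \<omega> y)\<^sup>2)) - SV \<omega>" for \<omega>
      using S7[of \<omega>] by simp
    have "expectation (\<lambda>\<omega>. (X \<omega>)\<^sup>2) = expectation (\<lambda>\<omega>. (\<Sum>a\<in>UNIV. \<Sum>y\<in>UNIV. pol s a * (P \<omega> s a y * (V \<omega> y)\<^sup>2))) - expectation SV"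
      unfolding e using iSV by (simp add: iPV2 integrable_sum)
    also have "\<dots> = (\<Sum>a\<in>UNIV. \<Sum>y\<in>UNIV. pol s a * expectation (\<lambda>\<omega>. P \<omega> s a y * (V \<omega> y)\<^sup>2)) - expectation SV"
      by (simp add: iPV2 integrable_sum)
    finally show ?thesis by (simp add: key2)
  qed
  have S9: "expectation (\<lambda>\<omega>. (V \<omega> y)\<^sup>2) = U y + (Vb y)\<^sup>2" for y
    using var_eq[OF mV bV, of y] by (simp add: U_def' Vb_def')
  have S10: "(\<Sum>a\<in>UNIV. \<Sum>y\<in>UNIV. pol s a * pb s a y) = 1"
  proof -
    have "(\<Sum>y\<in>UNIV. pb s a y) = 1" for a
    proof -
      have "(\<Sum>y\<in>UNIV. pb s a y) = expectation (\<lambda>\<omega>. \<Sum>y\<in>UNIV. P \<omega> s a y)"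
        unfolding pb_def' using Bochner_Integration.integral_sum[where I=UNIV and f="\<lambda>y \<omega>. P \<omega> s a y" and M=M] bdd_integrable[OF mP bP] by simp
      then show ?thesis by (simp add: dists.p_sum[OF D] prob_space)
    qed
    then show ?thesis by (simp add: sum_distrib_left[symmetric] dists.pol_sum[OF D])
  qed
  have S11: "step_var pol pb s Vb = (\<Sum>a\<in>UNIV. \<Sum>y\<in>UNIV. pol s a * pb s a y * (Vb y)\<^sup>2) - (expectation X)\<^sup>2"
    unfolding S3 by (rule step_var_alt[where pol=pol and q=pb and s=s, OF S10])
  have LU: "local_unc M P \<gamma> r pol s = step_var pol pb s Vb - expectation SV"
    by (simp add: local_unc_def pb_def Vb_def SV_def V_def)
  have "U s = \<gamma>\<^sup>2 * ((\<Sum>a\<in>UNIV. \<Sum>y\<in>UNIV. pol s a * (pb s a y * (U y + (Vb y)\<^sup>2))) - expectation SV - (expectation X)\<^sup>2)"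
    unfolding S5 S6 S8 S9 by simp
  also have "\<dots> = \<gamma>\<^sup>2 * (step_var pol pb s Vb - expectation SV) + \<gamma>\<^sup>2 * (\<Sum>a\<in>UNIV. \<Sum>y\<in>UNIV. pol s a * pb s a y * U y)"
    unfolding S11 by (simp add: algebra_simps sum.distrib)
  finally show ?thesis unfolding LU by (simp add: U_def pb_def)
qed

end
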